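(* Let $X$ be a set with at least two elements. Then $\mathcal{PI}^{\ast}_X$ and $\overline{\mathcal{PI}^{\ast}}_X$ are fundamental.
   Context: Let $X'=\{x':x\in X\}$ be a disjoint copy of $X$. Let $P_X$ be the set of all partitions of $X\cup X'$ each of whose blocks is either a singleton (a point) or a generalised line (a subset meeting both $X$ and $X'$). Product $\star$: with $X''$ a third copy of $X$, regard $\alpha$ as a partition of $X\cup X''$ and $\beta$ as a partition of $X''\cup X'$, let $\sim$ be the equivalence on $X\cup X''\cup X'$ generated by the blocks of both; $\alpha\star\beta$ is the partition of $X\cup X'$ in which distinct $u,v$ are in one block iff $u\sim v$ and the $\sim$-class of $u$ contains no singleton block of $\alpha$ or $\beta$. Product $\circ$: $\alpha\circ\beta$ has as generalised lines exactly the sets $A\cup D'$ with $A\cup B'$ a generalised line of $\alpha$ and $B\cup D'$ a generalised line of $\beta$ (same $B\subseteq X$), all other elements points. $\mathcal{PI}^{\ast}_X=(P_X,\star)$ and $\overline{\mathcal{PI}^{\ast}}_X=(P_X,\circ)$ are inverse semigroups. An inverse semigroup $S$ is fundamental if the relation $\mu=\{(a,b)\in S\times S: a^{-1}ea=b^{-1}eb \text{ for all idempotents } e\in S\}$ is the identity relation. *)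

theory Defs
  imports "HOL-Library.Disjoint_Sets"
begin

text \<open>Three disjoint copies of X: L x = x (in X), R x = x' (in X'), M x = x'' (in X'').\<close>
datatype 'a cp = L 'a | R 'a | M 'a

definition cset :: "'a set \<Rightarrow> 'a cp set" where
  "cset X = L ` X \<union> R ` X"

definition is_gline :: "'a set \<Rightarrow> 'a cp set \<Rightarrow> bool" where
  "is_gline X B \<longleftrightarrow> B \<inter> L ` X \<noteq> {} \<and> B \<inter> R ` X \<noteq> {}"

definition PX :: "'a set \<Rightarrow> 'a cp set set set" where
  "PX X = {P. partition_on (cset X) P \<and> (\<forall>B\<in>P. is_singleton B \<or> is_gline X B)}"

text \<open>Renamings: alpha regarded on X \<union> X'', beta regarded on X'' \<union> X'.\<close>
fun R_to_M :: "'a cp \<Rightarrow> 'a cp" where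
  "R_to_M (R x) = M x" | "R_to_M u = u"

fun L_to_M :: "'a cp \<Rightarrow> 'a cp" where
  "L_to_M (L x) = M x" | "L_to_M u = u"

definition star_blocks :: "'a cp set set \<Rightarrow> 'a cp set set \<Rightarrow> 'a cp set set" where
  "star_blocks \<alpha> \<beta> = (\<lambda>B. R_to_M ` B) ` \<alpha> \<union> (\<lambda>B. L_to_M ` B) ` \<beta>"

definition star_sim :: "'a cp set set \<Rightarrow> 'a cp set set \<Rightarrow> ('a cp \<times> 'a cp) set" where
  "star_sim \<alpha> \<beta> = {(u, v). \<exists>B\<in>star_blocks \<alpha> \<beta>. u \<in> B \<and> v \<in> B}\<^sup>*"

definition star_good :: "'a cp set set \<Rightarrow> 'a cp set set \<Rightarrow> 'a cp \<Rightarrow> bool" where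
  "star_good \<alpha> \<beta> u \<longleftrightarrow>
     \<not> (\<exists>B\<in>star_blocks \<alpha> \<beta>. is_singleton B \<and> B \<subseteq> star_sim \<alpha> \<beta> `` {u})"

definition star :: "'a set \<Rightarrow> 'a cp set set \<Rightarrow> 'a cp set set \<Rightarrow> 'a cp set set" where
  "star X \<alpha> \<beta> = {B. \<exists>u\<in>cset X. B = {v \<in> cset X. v = u \<or>
        ((u, v) \<in> star_sim \<alpha> \<beta> \<and> star_good \<alpha> \<beta> u)}}"

definition circ_lines :: "'a set \<Rightarrow> 'a cp set set \<Rightarrow> 'a cp set set \<Rightarrow> 'a cp set set" where
  "circ_lines X \<alpha> \<beta> = {L ` A \<union> R ` D | A B D.
      L ` A \<union> R ` B \<in> \<alpha> \<and> is_gline X (L ` A \<union> R ` B) \<and>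
      L ` B \<union> R ` D \<in> \<beta> \<and> is_gline X (L ` B \<union> R ` D)}"

definition circ :: "'a set \<Rightarrow> 'a cp set set \<Rightarrow> 'a cp set set \<Rightarrow> 'a cp set set" where
  "circ X \<alpha> \<beta> = circ_lines X \<alpha> \<beta> \<union> {{u} | u. u \<in> cset X - \<Union>(circ_lines X \<alpha> \<beta>)}"

definition inv_el :: "'s set \<Rightarrow> ('s \<Rightarrow> 's \<Rightarrow> 's) \<Rightarrow> 's \<Rightarrow> 's" where
  "inv_el S m a = (THE b. b \<in> S \<and> m (m a b) a = a \<and> m (m b a) b = b)"

definition mu_rel :: "'s set \<Rightarrow> ('s \<Rightarrow> 's \<Rightarrow> 's) \<Rightarrow> ('s \<times> 's) set" where
  "mu_rel S m = {(a, b). a \<in> S \<and> b \<in> S \<and>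
     (\<forall>e\<in>S. m e e = e \<longrightarrow> m (m (inv_el S m a) e) a = m (m (inv_el S m b) e) b)}"

definition fundamental :: "'s set \<Rightarrow> ('s \<Rightarrow> 's \<Rightarrow> 's) \<Rightarrow> bool" where
  "fundamental S m \<longleftrightarrow> mu_rel S m = Id_on S"

end

theory Submission
  imports Defs
begin

lemma cset_cases: "u \<in> cset X \<Longrightarrow> (\<exists>x\<in>X. u = L x) \<or> (\<exists>x\<in>X. u = R x)"
  unfolding cset_def by auto

lemma L_cset[simp]: "L x \<in> cset X \<longleftrightarrow> x \<in> X" unfolding cset_def by auto
lemma R_cset[simp]: "R x \<in> cset X \<longleftrightarrow> x \<in> X" unfolding cset_def by auto
lemma M_cset[simp]: "M x \<notin> cset X" unfolding cset_def by auto

lemma PX_sub: "P \<in> PX X \<Longrightarrow> Z \<in> P \<Longrightarrow> Z \<subseteq> cset X"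
  unfolding PX_def partition_on_def by auto

lemma PX_ex: "P \<in> PX X \<Longrightarrow> u \<in> cset X \<Longrightarrow> \<exists>Z\<in>P. u \<in> Z"
  unfolding PX_def partition_on_def by auto

lemma PX_eq: "P \<in> PX X \<Longrightarrow> Z \<in> P \<Longrightarrow> Z' \<in> P \<Longrightarrow> u \<in> Z \<Longrightarrow> u \<in> Z' \<Longrightarrow> Z = Z'"
  unfolding PX_def partition_on_def pairwise_def disjnt_def by blast

lemma PX_ne: "P \<in> PX X \<Longrightarrow> Z \<in> P \<Longrightarrow> Z \<noteq> {}"
  unfolding PX_def partition_on_def by auto

lemma gline_iff: "is_gline X Z \<longleftrightarrow> (\<exists>x\<in>X. L x \<in> Z) \<and> (\<exists>y\<in>X. R y \<in> Z)"
  unfolding is_gline_def by auto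

lemma gline_not_single: "is_gline X Z \<Longrightarrow> \<not> is_singleton Z"
  unfolding gline_iff is_singleton_def by auto

lemma PX_cases: "P \<in> PX X \<Longrightarrow> Z \<in> P \<Longrightarrow> (\<exists>u. Z = {u}) \<or> is_gline X Z"
  unfolding PX_def is_singleton_def by auto

lemma PX_line: "P \<in> PX X \<Longrightarrow> Z \<in> P \<Longrightarrow> \<not> is_singleton Z \<Longrightarrow> (\<exists>x. L x \<in> Z) \<and> (\<exists>y. R y \<in> Z)"
  using PX_cases[of P X Z] gline_iff[of X Z] by auto

lemma PX_line2: "P \<in> PX X \<Longrightarrow> Z \<in> P \<Longrightarrow> u \<in> Z \<Longrightarrow> Z \<noteq> {u} \<Longrightarrow> (\<exists>x. L x \<in> Z) \<and> (\<exists>y. R y \<in> Z)"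
  using PX_line[of P X Z] by (auto simp: is_singleton_def)

lemma PX_lines_eq:
  assumes P: "P \<in> PX X" and Q: "Q \<in> PX X"
    and PQ: "\<And>Z. Z \<in> P \<Longrightarrow> is_gline X Z \<Longrightarrow> Z \<in> Q"
    and QP: "\<And>Z. Z \<in> Q \<Longrightarrow> is_gline X Z \<Longrightarrow> Z \<in> P"
  shows "P = Q"
proof -
  have *: "Z \<in> Q" if P: "P \<in> PX X" and Q: "Q \<in> PX X"
    and PQ: "\<And>Z. Z \<in> P \<Longrightarrow> is_gline X Z \<Longrightarrow> Z \<in> Q"
    and QP: "\<And>Z. Z \<in> Q \<Longrightarrow> is_gline X Z \<Longrightarrow> Z \<in> P" and Z: "Z \<in> P" for P Q Z
  proof (cases "is_gline X Z")
    case True then show ?thesis using PQ Z by blast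
  next
    case False
    then obtain u where u: "Z = {u}" using PX_cases[OF P Z] by blast
    have "u \<in> cset X" using PX_sub[OF P Z] u by auto
    then obtain W where W: "W \<in> Q" "u \<in> W" using PX_ex[OF Q] by blast
    show ?thesis
    proof (cases "is_gline X W")
      case True
      then have "W \<in> P" using QP W by blast
      then have "W = Z" using PX_eq[OF P _ Z, of W u] W u by auto
      then show ?thesis using True False by simp
    next
      case False
      then show ?thesis using PX_cases[OF Q W(1)] W u by auto
    qed
  qed
  show ?thesis using *[OF P Q PQ QP] *[OF Q P QP PQ] by blast
qed

definition lp :: "'a cp set \<Rightarrow> 'a set" where "lp Z = {x. L x \<in> Z}"
definition rp :: "'a cp set \<Rightarrow> 'a set" where "rp Z = {x. R x \<in> Z}"

lemma cset_repr: "Z \<subseteq> cset X \<Longrightarrow> Z = L ` lp Z \<union> R ` rp Z"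
  unfolding lp_def rp_def cset_def by auto

lemma lp_LR[simp]: "lp (L ` A \<union> R ` B) = A" unfolding lp_def by auto
lemma rp_LR[simp]: "rp (L ` A \<union> R ` B) = B" unfolding rp_def by auto

lemma LR_inj: "L ` A \<union> R ` B = L ` A' \<union> R ` B' \<longleftrightarrow> A = A' \<and> B = B'"
  by (metis lp_LR rp_LR)

definition sblk :: "'a set \<Rightarrow> 'a cp set set \<Rightarrow> 'a cp set set \<Rightarrow> 'a cp \<Rightarrow> 'a cp set" where
  "sblk X \<alpha> \<beta> u = {v \<in> cset X. v = u \<or> ((u, v) \<in> star_sim \<alpha> \<beta> \<and> star_good \<alpha> \<beta> u)}"

lemma star_eq_img: "star X \<alpha> \<beta> = sblk X \<alpha> \<beta> ` cset X"
  unfolding star_def sblk_def by auto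

lemma sblk_in: "u \<in> cset X \<Longrightarrow> sblk X \<alpha> \<beta> u \<in> star X \<alpha> \<beta>"
  unfolding star_eq_img by auto

lemma sblk_self: "u \<in> cset X \<Longrightarrow> u \<in> sblk X \<alpha> \<beta> u"
  unfolding sblk_def by auto

lemma sblk_sub: "sblk X \<alpha> \<beta> u \<subseteq> cset X"
  unfolding sblk_def by auto

lemma sim_sym: "(u, v) \<in> star_sim \<alpha> \<beta> \<Longrightarrow> (v, u) \<in> star_sim \<alpha> \<beta>"
proof -
  have "sym {(u, v). \<exists>B\<in>star_blocks \<alpha> \<beta>. u \<in> B \<and> v \<in> B}"
    unfolding sym_def by blast
  then have "sym (star_sim \<alpha> \<beta>)" unfolding star_sim_def by (rule sym_rtrancl)
  then show "(u, v) \<in> star_sim \<alpha> \<beta> \<Longrightarrow> (v, u) \<in> star_sim \<alpha> \<beta>" unfolding sym_def by blast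
qed

lemma sim_trans: "(u, v) \<in> star_sim \<alpha> \<beta> \<Longrightarrow> (v, w) \<in> star_sim \<alpha> \<beta> \<Longrightarrow> (u, w) \<in> star_sim \<alpha> \<beta>"
  unfolding star_sim_def by (rule rtrancl_trans)

lemma sim_refl: "(u, u) \<in> star_sim \<alpha> \<beta>"
  unfolding star_sim_def by simp

lemma sim_block: "B \<in> star_blocks \<alpha> \<beta> \<Longrightarrow> u \<in> B \<Longrightarrow> v \<in> B \<Longrightarrow> (u, v) \<in> star_sim \<alpha> \<beta>"
  unfolding star_sim_def by blast

lemma sim_class_eq: assumes "(u, v) \<in> star_sim \<alpha> \<beta>" shows "star_sim \<alpha> \<beta> `` {u} = star_sim \<alpha> \<beta> `` {v}"
proof (intro equalityI subsetI)
  fix w assume "w \<in> star_sim \<alpha> \<beta> `` {u}"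
  then show "w \<in> star_sim \<alpha> \<beta> `` {v}" using sim_trans[OF sim_sym[OF assms]] by blast
next
  fix w assume "w \<in> star_sim \<alpha> \<beta> `` {v}"
  then show "w \<in> star_sim \<alpha> \<beta> `` {u}" using sim_trans[OF assms] by blast
qed

lemma good_cong: assumes "(u, v) \<in> star_sim \<alpha> \<beta>" shows "star_good \<alpha> \<beta> u = star_good \<alpha> \<beta> v"
  unfolding star_good_def using sim_class_eq[OF assms] by simp

lemma good_contra:
  assumes "star_good \<alpha> \<beta> w" "(w, u) \<in> star_sim \<alpha> \<beta>" "B \<in> star_blocks \<alpha> \<beta>" "u \<in> B" "is_singleton B"
  shows False
proof -
  have "B = {u}" using assms(4,5) unfolding is_singleton_def by auto
  then show False using assms unfolding star_good_def by auto
qed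

lemma good_contra1:
  assumes "star_good \<alpha> \<beta> w" "(w, u) \<in> star_sim \<alpha> \<beta>" "{u} \<in> star_blocks \<alpha> \<beta>"
  shows False
  using good_contra[OF assms(1,2,3)] by auto

lemma sblk_eq:
  assumes "v \<in> sblk X \<alpha> \<beta> u" "u \<in> cset X"
  shows "sblk X \<alpha> \<beta> v = sblk X \<alpha> \<beta> u"
proof (cases "v = u")
  case True then show ?thesis by simp
next
  case False
  then have uv: "(u, v) \<in> star_sim \<alpha> \<beta>" and g: "star_good \<alpha> \<beta> u" and vc: "v \<in> cset X"
    using assms unfolding sblk_def by auto
  have g2: "star_good \<alpha> \<beta> v" using g good_cong[OF uv] by simp
  have vu: "(v, u) \<in> star_sim \<alpha> \<beta>" using sim_sym[OF uv] .
  have "(v, w) \<in> star_sim \<alpha> \<beta> \<longleftrightarrow> (u, w) \<in> star_sim \<alpha> \<beta>" for w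
    using sim_trans[OF uv, of w] sim_trans[OF vu, of w] by blast
  moreover have "(v, u) \<in> star_sim \<alpha> \<beta>" by (rule vu)
  moreover have "(u, v) \<in> star_sim \<alpha> \<beta>" by (rule uv)
  ultimately show ?thesis unfolding sblk_def using g g2 assms(2) vc by blast
qed

lemma star_blk:
  assumes "G \<in> star X \<alpha> \<beta>" "u \<in> G"
  shows "G = sblk X \<alpha> \<beta> u" "u \<in> cset X"
proof -
  obtain w where w: "w \<in> cset X" "G = sblk X \<alpha> \<beta> w" using assms(1) unfolding star_eq_img by auto
  then show "G = sblk X \<alpha> \<beta> u" using sblk_eq[of u X \<alpha> \<beta> w] assms(2) by simp
  show "u \<in> cset X" using w assms(2) sblk_sub by blast
qed

lemma sblk_other:
  assumes "v \<in> sblk X \<alpha> \<beta> u" "v \<noteq> u"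
  shows "star_good \<alpha> \<beta> u" "(u, v) \<in> star_sim \<alpha> \<beta>"
  using assms unfolding sblk_def by auto

lemma sblk_class:
  assumes "star_good \<alpha> \<beta> u" "(u, v) \<in> star_sim \<alpha> \<beta>" "v \<in> cset X"
  shows "v \<in> sblk X \<alpha> \<beta> u"
  using assms unfolding sblk_def by auto

definition pblocks :: "'a set \<Rightarrow> 'a cp set set \<Rightarrow> bool" where
  "pblocks X P \<longleftrightarrow> (\<forall>Z\<in>P. Z \<subseteq> cset X) \<and> (\<forall>Z\<in>P. \<forall>Z'\<in>P. Z \<inter> Z' \<noteq> {} \<longrightarrow> Z = Z')"

lemma PX_pblocks: "P \<in> PX X \<Longrightarrow> pblocks X P"
  unfolding pblocks_def using PX_sub PX_eq by blast

lemma star_pblocks: "pblocks X (star X \<alpha> \<beta>)"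
  unfolding pblocks_def
proof (intro conjI ballI impI)
  fix Z assume "Z \<in> star X \<alpha> \<beta>" then show "Z \<subseteq> cset X" using star_blk(2) by blast
next
  fix Z Z' assume a: "Z \<in> star X \<alpha> \<beta>" "Z' \<in> star X \<alpha> \<beta>" "Z \<inter> Z' \<noteq> {}"
  then obtain u where "u \<in> Z" "u \<in> Z'" by blast
  then show "Z = Z'" using star_blk(1)[OF a(1)] star_blk(1)[OF a(2)] by metis
qed


lemma RM_inj: "z \<in> cset X \<Longrightarrow> z' \<in> cset X \<Longrightarrow> R_to_M z = R_to_M z' \<Longrightarrow> z = z'"
  by (auto simp: cset_def)
lemma LM_inj: "z \<in> cset X \<Longrightarrow> z' \<in> cset X \<Longrightarrow> L_to_M z = L_to_M z' \<Longrightarrow> z = z'"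
  by (auto simp: cset_def)
lemma RM_LM: "z \<in> cset X \<Longrightarrow> z' \<in> cset X \<Longrightarrow> R_to_M z = L_to_M z' \<Longrightarrow> \<exists>t. z = R t \<and> z' = L t"
  by (auto simp: cset_def)

lemma star_blocks_cases: "B \<in> star_blocks \<alpha> \<beta> \<Longrightarrow> (\<exists>Z\<in>\<alpha>. B = R_to_M ` Z) \<or> (\<exists>W\<in>\<beta>. B = L_to_M ` W)"
  unfolding star_blocks_def by auto

lemma star_blocksL: "Z \<in> \<alpha> \<Longrightarrow> R_to_M ` Z \<in> star_blocks \<alpha> \<beta>"
  unfolding star_blocks_def by auto
lemma star_blocksR: "W \<in> \<beta> \<Longrightarrow> L_to_M ` W \<in> star_blocks \<alpha> \<beta>"
  unfolding star_blocks_def by auto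

lemma pblocksD: "pblocks X P \<Longrightarrow> Z \<in> P \<Longrightarrow> Z' \<in> P \<Longrightarrow> u \<in> Z \<Longrightarrow> u \<in> Z' \<Longrightarrow> Z = Z'"
  unfolding pblocks_def by blast
lemma pblocks_sub: "pblocks X P \<Longrightarrow> Z \<in> P \<Longrightarrow> Z \<subseteq> cset X"
  unfolding pblocks_def by blast

lemma two_ne_single: "a \<in> B \<Longrightarrow> b \<in> B \<Longrightarrow> a \<noteq> b \<Longrightarrow> \<not> is_singleton B"
  by (auto simp: is_singleton_def)

lemma two_block:
  assumes pa: "pblocks X \<alpha>" and pb: "pblocks X \<beta>" and Z1: "Z1 \<in> \<alpha>" and Z2: "Z2 \<in> \<beta>"
    and match: "\<And>t. R t \<in> Z1 \<longleftrightarrow> L t \<in> Z2"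
    and l1: "L x1 \<in> Z1" and r1: "R y1 \<in> Z1" and r2: "R y2 \<in> Z2"
    and u: "(u \<in> Z1 \<and> (\<exists>t. u = L t)) \<or> (u \<in> Z2 \<and> (\<exists>t. u = R t))"
  shows "sblk X \<alpha> \<beta> u = {v\<in>Z1. \<exists>t. v = L t} \<union> {v\<in>Z2. \<exists>t. v = R t}"
proof -
  define S where "S = R_to_M ` Z1 \<union> L_to_M ` Z2"
  have Z1c: "Z1 \<subseteq> cset X" using pblocks_sub[OF pa Z1] .
  have Z2c: "Z2 \<subseteq> cset X" using pblocks_sub[OF pb Z2] .
  have clos: "B = R_to_M ` Z1 \<or> B = L_to_M ` Z2" if B: "B \<in> star_blocks \<alpha> \<beta>" and w: "w \<in> B" "w \<in> S" for B w
  proof -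
    from star_blocks_cases[OF B] show ?thesis
    proof
      assume "\<exists>Z\<in>\<alpha>. B = R_to_M ` Z"
      then obtain Z where Z: "Z \<in> \<alpha>" "B = R_to_M ` Z" by blast
      have Zc: "Z \<subseteq> cset X" using pblocks_sub[OF pa Z(1)] .
      obtain z where z: "z \<in> Z" "w = R_to_M z" using Z w by blast
      have "Z = Z1"
      proof (cases "w \<in> R_to_M ` Z1")
        case True
        then obtain z1 where "z1 \<in> Z1" "w = R_to_M z1" by blast
        then have "z = z1" using RM_inj[of z X z1] z Zc Z1c by auto
        then show ?thesis using pblocksD[OF pa Z(1) Z1] z \<open>z1 \<in> Z1\<close> by blast
      next
        case False
        then obtain z2 where z2: "z2 \<in> Z2" "w = L_to_M z2" using w S_def by blast
        then obtain t where "z = R t" "z2 = L t" using RM_LM[of z X z2] z Zc Z2c by auto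
        then have "R t \<in> Z1" using match z2 by auto
        then show ?thesis using pblocksD[OF pa Z(1) Z1] z \<open>z = R t\<close> by blast
      qed
      then show ?thesis using Z by blast
    next
      assume "\<exists>W\<in>\<beta>. B = L_to_M ` W"
      then obtain Z where Z: "Z \<in> \<beta>" "B = L_to_M ` Z" by blast
      have Zc: "Z \<subseteq> cset X" using pblocks_sub[OF pb Z(1)] .
      obtain z where z: "z \<in> Z" "w = L_to_M z" using Z w by blast
      have "Z = Z2"
      proof (cases "w \<in> L_to_M ` Z2")
        case True
        then obtain z1 where "z1 \<in> Z2" "w = L_to_M z1" by blast
        then have "z = z1" using LM_inj[of z X z1] z Zc Z2c by auto
        then show ?thesis using pblocksD[OF pb Z(1) Z2] z \<open>z1 \<in> Z2\<close> by blast
      next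
        case False
        then obtain z2 where z2: "z2 \<in> Z1" "w = R_to_M z2" using w S_def by blast
        then obtain t where "z2 = R t" "z = L t" using RM_LM[of z2 X z] z Zc Z1c by auto
        then have "L t \<in> Z2" using match z2 by auto
        then show ?thesis using pblocksD[OF pb Z(1) Z2] z \<open>z = L t\<close> by blast
      qed
      then show ?thesis using Z by blast
    qed
  qed
  have uS: "u \<in> S" using u unfolding S_def by (auto simp: image_iff) (metis R_to_M.simps(2), metis L_to_M.simps(2))
  have uc: "u \<in> cset X" using u Z1c Z2c by blast
  have cls: "v \<in> S" if "(u, v) \<in> star_sim \<alpha> \<beta>" for v
    using that unfolding star_sim_def
  proof (induction rule: rtrancl_induct)
    case base then show ?case using uS .
  next
    case (step v w)
    then obtain B where "B \<in> star_blocks \<alpha> \<beta>" "v \<in> B" "w \<in> B" by blast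
    then show ?case using clos[of B v] step.IH unfolding S_def by blast
  qed
  have My: "M y1 \<in> R_to_M ` Z1" using r1 by (metis R_to_M.simps(1) imageI)
  have My2: "M y1 \<in> L_to_M ` Z2" using r1 match by (metis L_to_M.simps(1) imageI)
  have toMy: "(v, M y1) \<in> star_sim \<alpha> \<beta>" if "v \<in> S" for v
  proof (cases "v \<in> R_to_M ` Z1")
    case True then show ?thesis using sim_block[OF star_blocksL[OF Z1] _ My] by blast
  next
    case False then have "v \<in> L_to_M ` Z2" using that S_def by blast
    then show ?thesis using sim_block[OF star_blocksR[OF Z2] _ My2] by blast
  qed
  have Sc: "(u, v) \<in> star_sim \<alpha> \<beta>" if "v \<in> S" for v
    using sim_trans[OF toMy[OF uS] sim_sym[OF toMy[OF that]]] .
  have ns1: "\<not> is_singleton (R_to_M ` Z1)"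
  proof -
    have a: "L x1 \<in> R_to_M ` Z1" using l1 by (metis R_to_M.simps(2) imageI)
    show ?thesis using two_ne_single[OF a My] by simp
  qed
  have ns2: "\<not> is_singleton (L_to_M ` Z2)"
  proof -
    have a: "R y2 \<in> L_to_M ` Z2" by (rule rev_image_eqI[OF r2]) simp
    show ?thesis using two_ne_single[OF a My2] by simp
  qed
  have good: "star_good \<alpha> \<beta> u"
    unfolding star_good_def
  proof
    assume "\<exists>B\<in>star_blocks \<alpha> \<beta>. is_singleton B \<and> B \<subseteq> star_sim \<alpha> \<beta> `` {u}"
    then obtain B w where B: "B \<in> star_blocks \<alpha> \<beta>" "is_singleton B" "B \<subseteq> star_sim \<alpha> \<beta> `` {u}" "B = {w}"
      unfolding is_singleton_def by blast
    then have "w \<in> S" using cls by blast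
    then have "w \<in> B" "B = R_to_M ` Z1 \<or> B = L_to_M ` Z2" using clos[OF B(1), of w] B(4) by auto
    then show False using B(2) ns1 ns2 by auto
  qed
  have "sblk X \<alpha> \<beta> u = S \<inter> cset X"
    unfolding sblk_def using good uS uc cls Sc by blast
  also have "\<dots> = {v\<in>Z1. \<exists>t. v = L t} \<union> {v\<in>Z2. \<exists>t. v = R t}"
  proof (intro equalityI subsetI)
    fix v assume v: "v \<in> S \<inter> cset X"
    then consider (a) z where "z \<in> Z1" "v = R_to_M z" | (b) z where "z \<in> Z2" "v = L_to_M z"
      unfolding S_def by blast
    then show "v \<in> {v\<in>Z1. \<exists>t. v = L t} \<union> {v\<in>Z2. \<exists>t. v = R t}"
    proof cases
      case a then show ?thesis using v Z1c by (cases z) auto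
    next
      case b then show ?thesis using v Z2c by (cases z) auto
    qed
  next
    fix v assume "v \<in> {v\<in>Z1. \<exists>t. v = L t} \<union> {v\<in>Z2. \<exists>t. v = R t}"
    then show "v \<in> S \<inter> cset X" unfolding S_def using Z1c Z2c
      by (auto simp: image_iff) (metis R_to_M.simps(2), metis L_to_M.simps(2))
  qed
  finally show ?thesis .
qed

lemma sblk_pointL:
  assumes "{L x} \<in> \<alpha>" "x \<in> X"
  shows "sblk X \<alpha> \<beta> (L x) = {L x}"
proof -
  have "{L x} \<in> star_blocks \<alpha> \<beta>" using star_blocksL[OF assms(1), of \<beta>] by simp
  then have "\<not> star_good \<alpha> \<beta> (L x)" using good_contra1[OF _ sim_refl] by blast
  then show ?thesis unfolding sblk_def using assms(2) by auto
qed

lemma sblk_pointR: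
  assumes "{R x} \<in> \<beta>" "x \<in> X"
  shows "sblk X \<alpha> \<beta> (R x) = {R x}"
proof -
  have "{R x} \<in> star_blocks \<alpha> \<beta>" using star_blocksR[OF assms(1), of \<alpha>] by simp
  then have "\<not> star_good \<alpha> \<beta> (R x)" using good_contra1[OF _ sim_refl] by blast
  then show ?thesis unfolding sblk_def using assms(2) by auto
qed


fun sw :: "'a cp \<Rightarrow> 'a cp" where
  "sw (L x) = R x" | "sw (R x) = L x" | "sw (M x) = M x"

lemma sw_sw[simp]: "sw (sw u) = u" by (cases u) auto
lemma sw_inj: "inj sw" by (metis injI sw_sw)
lemma mem_sw_img[simp]: "u \<in> sw ` Z \<longleftrightarrow> sw u \<in> Z"
  by (metis image_iff sw_sw)
lemma sw_img_sw[simp]: "sw ` sw ` Z = Z" by (auto simp: image_iff)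
lemma sw_cset: "sw ` cset X = cset X"
proof (rule set_eqI)
  fix x show "x \<in> sw ` cset X \<longleftrightarrow> x \<in> cset X" by (simp only: mem_sw_img) (cases x, auto simp: cset_def)
qed

definition tr :: "'a cp set set \<Rightarrow> 'a cp set set" where
  "tr P = (\<lambda>B. sw ` B) ` P"

lemma tr_tr[simp]: "tr (tr P) = P" unfolding tr_def image_comp by (simp add: comp_def)

lemma tr_mem: "Z \<in> tr P \<longleftrightarrow> sw ` Z \<in> P"
  unfolding tr_def by (metis image_iff sw_img_sw)

lemma tr_PX: assumes P: "P \<in> PX X" shows "tr P \<in> PX X"
proof -
  have pa: "partition_on (cset X) P" using P unfolding PX_def by auto
  have "partition_on (sw ` cset X) ((`) sw ` P - {{}})"
    by (rule partition_on_inj_image[OF pa]) (meson inj_on_subset sw_inj subset_UNIV)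
  moreover have "{} \<notin> P" using pa partition_onD3 by blast
  moreover have "(`) sw ` P - {{}} = (`) sw ` P" using \<open>{} \<notin> P\<close> by auto
  ultimately have "partition_on (cset X) (tr P)" unfolding tr_def sw_cset by auto
  moreover have "is_singleton B \<or> is_gline X B" if "B \<in> tr P" for B
  proof -
    have B: "sw ` B \<in> P" using that tr_mem by blast
    from PX_cases[OF P B] show ?thesis
    proof
      assume "\<exists>u. sw ` B = {u}"
      then obtain u where "sw ` B = {u}" by blast
      then have "B = {sw u}" by (metis image_empty image_insert sw_img_sw)
      then show ?thesis by simp
    next
      assume "is_gline X (sw ` B)"
      then have "is_gline X B" unfolding gline_iff by (metis mem_sw_img sw.simps(1,2))
      then show ?thesis by simp
    qed
  qed
  ultimately show ?thesis unfolding PX_def by auto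
qed

lemma star_eqI:
  assumes P: "P \<in> PX X" and h: "\<And>u Q. u \<in> cset X \<Longrightarrow> Q \<in> P \<Longrightarrow> u \<in> Q \<Longrightarrow> sblk X \<alpha> \<beta> u = Q"
  shows "star X \<alpha> \<beta> = P"
proof (intro equalityI subsetI)
  fix G assume "G \<in> star X \<alpha> \<beta>"
  then obtain u where u: "u \<in> cset X" "G = sblk X \<alpha> \<beta> u" unfolding star_eq_img by auto
  obtain Q where "Q \<in> P" "u \<in> Q" using PX_ex[OF P u(1)] by blast
  then show "G \<in> P" using h[OF u(1)] u(2) by simp
next
  fix Q assume Q: "Q \<in> P"
  then obtain u where "u \<in> Q" using PX_ne[OF P] by blast
  moreover have "u \<in> cset X" using PX_sub[OF P Q] \<open>u \<in> Q\<close> by blast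
  ultimately show "Q \<in> star X \<alpha> \<beta>" using h[OF _ Q] sblk_in by metis
qed

lemma Lpart_Rpart: "Q \<subseteq> cset X \<Longrightarrow> {v\<in>Q. \<exists>t. v = L t} \<union> {v\<in>Q. \<exists>t. v = R t} = Q"
  unfolding cset_def by auto

lemma star_inv1:
  assumes a: "a \<in> PX X"
  shows "star X (star X a (tr a)) a = a"
proof (rule star_eqI[OF a])
  fix u Q assume u: "u \<in> cset X" and Q: "Q \<in> a" "u \<in> Q"
  have pa: "pblocks X a" using PX_pblocks[OF a] .
  have pta: "pblocks X (tr a)" using PX_pblocks[OF tr_PX[OF a]] .
  have Qc: "Q \<subseteq> cset X" using PX_sub[OF a Q(1)] .
  from PX_cases[OF a Q(1)] show "sblk X (star X a (tr a)) a u = Q"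
  proof
    assume "\<exists>v. Q = {v}"
    then have Qu: "Q = {u}" using Q by auto
    from cset_cases[OF u] show ?thesis
    proof
      assume "\<exists>x\<in>X. u = L x"
      then obtain x where x: "x \<in> X" "u = L x" by blast
      have "sblk X a (tr a) (L x) = {L x}" using sblk_pointL[of x a X] Q Qu x by simp
      then have "{L x} \<in> star X a (tr a)" using sblk_in[of "L x" X a "tr a"] x by simp
      then show ?thesis using sblk_pointL[of x _ X a] x Qu by simp
    next
      assume "\<exists>x\<in>X. u = R x"
      then obtain x where x: "x \<in> X" "u = R x" by blast
      then show ?thesis using sblk_pointR[of x a X] Q Qu by simp
    qed
  next
    assume gl: "is_gline X Q"
    then obtain x0 y0 where xy: "L x0 \<in> Q" "R y0 \<in> Q" unfolding gline_iff by blast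
    have Qt: "sw ` Q \<in> tr a" using Q(1) tr_mem by (metis sw_img_sw)
    define G where "G = sblk X a (tr a) (L x0)"
    have G: "G = {v\<in>Q. \<exists>t. v = L t} \<union> {v\<in>sw ` Q. \<exists>t. v = R t}"
      unfolding G_def
      by (rule two_block[OF pa pta Q(1) Qt, of x0 y0 x0]) (use xy in auto)
    have Gc: "G \<in> star X a (tr a)" unfolding G_def by (rule sblk_in) (use xy Qc in blast)
    have "sblk X (star X a (tr a)) a u = {v\<in>G. \<exists>t. v = L t} \<union> {v\<in>Q. \<exists>t. v = R t}"
      by (rule two_block[OF star_pblocks pa Gc Q(1), of x0 x0 y0]) (use xy G u Q(2) in \<open>auto simp: cset_def\<close>)
    also have "\<dots> = Q" using G Lpart_Rpart[OF Qc] by auto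
    finally show ?thesis .
  qed
qed

lemma star_inv2:
  assumes a: "a \<in> PX X"
  shows "star X (star X (tr a) a) (tr a) = tr a"
  using star_inv1[OF tr_PX[OF a]] by simp


lemma RM_L: "L t \<in> Z \<Longrightarrow> L t \<in> R_to_M ` Z" by (rule rev_image_eqI) auto
lemma RM_R: "R t \<in> Z \<Longrightarrow> M t \<in> R_to_M ` Z" by (rule rev_image_eqI) auto
lemma LM_L: "L t \<in> Z \<Longrightarrow> M t \<in> L_to_M ` Z" by (rule rev_image_eqI) auto
lemma LM_R: "R t \<in> Z \<Longrightarrow> R t \<in> L_to_M ` Z" by (rule rev_image_eqI) auto

lemma lemK:
  assumes a: "a \<in> PX X" and b: "b \<in> PX X" and eq: "star X (star X a b) a = a"
    and Z: "Z \<in> a" and lx: "L x \<in> Z" and ry: "R y \<in> Z" and W: "W \<in> b" and ly: "L y \<in> W"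
  shows "(\<exists>w. R w \<in> W) \<and> (\<forall>y'. L y' \<in> W \<longrightarrow> R y' \<in> Z) \<and> (\<forall>w. R w \<in> W \<longrightarrow> L w \<in> Z)"
proof -
  define c where "c = star X a b"
  have Zo: "Z \<in> star X c a" using eq Z unfolding c_def by simp
  have Zs: "Z = sblk X c a (L x)" using star_blk(1)[OF Zo lx] .
  have xX: "x \<in> X" using PX_sub[OF a Z] lx by auto
  have go: "star_good c a (L x)" using sblk_other(1)[of "R y" X c a "L x"] ry Zs by auto
  have inZ: "v \<in> Z" if "(L x, v) \<in> star_sim c a" "v \<in> cset X" for v
    using sblk_class[OF go that] Zs by simp
  define G where "G = sblk X a b (L x)"
  have Gc: "G \<in> c" unfolding G_def c_def by (rule sblk_in) (simp add: xX)
  have BG: "R_to_M ` G \<in> star_blocks c a" using star_blocksL[OF Gc] .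
  have lxG: "L x \<in> G" unfolding G_def by (rule sblk_self) (simp add: xX)
  have GM: "(L x, v) \<in> star_sim c a" if "v \<in> R_to_M ` G" for v
    using sim_block[OF BG RM_L[OF lxG] that] .
  have "G \<noteq> {L x}"
  proof
    assume "G = {L x}"
    then have "{L x} \<in> star_blocks c a" using BG by simp
    then show False using good_contra1[OF go sim_refl] by blast
  qed
  then obtain v where "v \<in> G" "v \<noteq> L x" using lxG by blast
  then have gi: "star_good a b (L x)" using sblk_other(1) unfolding G_def by blast
  have inG: "v \<in> G" if "(L x, v) \<in> star_sim a b" "v \<in> cset X" for v
    using sblk_class[OF gi that] unfolding G_def by simp
  have s1: "(L x, M y) \<in> star_sim a b"
    using sim_block[OF star_blocksL[OF Z] RM_L[OF lx] RM_R[OF ry]] .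
  have BW: "L_to_M ` W \<in> star_blocks a b" using star_blocksR[OF W] .
  have WM: "(L x, v) \<in> star_sim a b" if "v \<in> L_to_M ` W" for v
    using sim_trans[OF s1 sim_block[OF BW LM_L[OF ly] that]] .
  have "W \<noteq> {L y}"
  proof
    assume "W = {L y}"
    then have "{M y} \<in> star_blocks a b" using BW by simp
    then show False using good_contra1[OF gi s1] by blast
  qed
  then have K0: "\<exists>w. R w \<in> W" using PX_line2[OF b W ly] by blast
  have K2: "L w \<in> Z" if rw: "R w \<in> W" for w
  proof -
    have wX: "w \<in> X" using PX_sub[OF b W] rw by auto
    have "R w \<in> G" using inG[OF WM[OF LM_R[OF rw]]] wX by simp
    then have s2: "(L x, M w) \<in> star_sim c a" using GM[OF RM_R] by blast
    obtain V where V: "V \<in> a" "L w \<in> V" using PX_ex[OF a, of "L w"] wX by auto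
    have BV: "L_to_M ` V \<in> star_blocks c a" using star_blocksR[OF V(1)] .
    have "V \<noteq> {L w}"
    proof
      assume "V = {L w}"
      then have "{M w} \<in> star_blocks c a" using BV by simp
      then show False using good_contra1[OF go s2] by blast
    qed
    then obtain z where rz: "R z \<in> V" using PX_line2[OF a V(1) V(2)] by blast
    have zX: "z \<in> X" using PX_sub[OF a V(1)] rz by auto
    have "(L x, R z) \<in> star_sim c a" using sim_trans[OF s2 sim_block[OF BV LM_L[OF V(2)] LM_R[OF rz]]] .
    then have "R z \<in> Z" using inZ zX by simp
    then have "V = Z" using PX_eq[OF a V(1) Z rz] by simp
    then show ?thesis using V by simp
  qed
  have K1: "R y' \<in> Z" if ly': "L y' \<in> W" for y'
  proof -
    have yX: "y' \<in> X" using PX_sub[OF b W] ly' by auto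
    have s3: "(L x, M y') \<in> star_sim a b" using WM[OF LM_L[OF ly']] .
    obtain U where U: "U \<in> a" "R y' \<in> U" using PX_ex[OF a, of "R y'"] yX by auto
    have BU: "R_to_M ` U \<in> star_blocks a b" using star_blocksL[OF U(1)] .
    have "U \<noteq> {R y'}"
    proof
      assume "U = {R y'}"
      then have "{M y'} \<in> star_blocks a b" using BU by simp
      then show False using good_contra1[OF gi s3] by blast
    qed
    then obtain x2 where lx2: "L x2 \<in> U" using PX_line2[OF a U(1) U(2)] by blast
    have x2X: "x2 \<in> X" using PX_sub[OF a U(1)] lx2 by auto
    have "(L x, L x2) \<in> star_sim a b" using sim_trans[OF s3 sim_block[OF BU RM_R[OF U(2)] RM_L[OF lx2]]] .
    then have "L x2 \<in> G" using inG x2X by simp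
    then have "(L x, L x2) \<in> star_sim c a" using GM[OF RM_L] by blast
    then have "L x2 \<in> Z" using inZ x2X by simp
    then have "U = Z" using PX_eq[OF a U(1) Z lx2] by simp
    then show ?thesis using U by simp
  qed
  show ?thesis using K0 K1 K2 by blast
qed


lemma gline_sw: "is_gline X (sw ` Z) \<longleftrightarrow> is_gline X Z"
  unfolding gline_iff by (metis mem_sw_img sw.simps(1,2))

lemma swap_lines_tr:
  assumes a: "a \<in> PX X" and b: "b \<in> PX X"
    and ab: "\<And>Z. Z \<in> a \<Longrightarrow> is_gline X Z \<Longrightarrow> sw ` Z \<in> b"
    and ba: "\<And>W. W \<in> b \<Longrightarrow> is_gline X W \<Longrightarrow> sw ` W \<in> a"
  shows "b = tr a"
proof (rule PX_lines_eq[OF b tr_PX[OF a]])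
  fix W assume "W \<in> b" "is_gline X W"
  then show "W \<in> tr a" using ba tr_mem by blast
next
  fix Z assume Z: "Z \<in> tr a" "is_gline X Z"
  then have "sw ` Z \<in> a" "is_gline X (sw ` Z)" using tr_mem gline_sw by blast+
  then show "Z \<in> b" using ab by fastforce
qed

lemma star_U1:
  assumes a: "a \<in> PX X" and b: "b \<in> PX X"
    and eq1: "star X (star X a b) a = a" and eq2: "star X (star X b a) b = b"
    and Z: "Z \<in> a" and gl: "is_gline X Z"
  shows "sw ` Z \<in> b"
proof -
  obtain x y where lx: "L x \<in> Z" and ry: "R y \<in> Z" using gl unfolding gline_iff by blast
  have yX: "y \<in> X" using PX_sub[OF a Z] ry by auto
  obtain W where W: "W \<in> b" "L y \<in> W" using PX_ex[OF b, of "L y"] yX by auto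
  have K: "(\<exists>w. R w \<in> W) \<and> (\<forall>y'. L y' \<in> W \<longrightarrow> R y' \<in> Z) \<and> (\<forall>w. R w \<in> W \<longrightarrow> L w \<in> Z)"
    using lemK[OF a b eq1 Z lx ry W] by blast
  then obtain w where rw: "R w \<in> W" by blast
  have lw: "L w \<in> Z" using K rw by blast
  have K': "(\<exists>w. R w \<in> Z) \<and> (\<forall>y'. L y' \<in> Z \<longrightarrow> R y' \<in> W) \<and> (\<forall>w. R w \<in> Z \<longrightarrow> L w \<in> W)"
    using lemK[OF b a eq2 W(1) W(2) rw Z lw] by blast
  have "W = sw ` Z"
  proof (rule set_eqI)
    fix v
    show "v \<in> W \<longleftrightarrow> v \<in> sw ` Z"
    proof (cases v)
      case (L t) then show ?thesis using K K' by auto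
    next
      case (R t) then show ?thesis using K K' by auto
    next
      case (M t)
      have "M t \<notin> W" using PX_sub[OF b W(1)] by auto
      moreover have "M t \<notin> Z" using PX_sub[OF a Z] by auto
      ultimately show ?thesis using M by simp
    qed
  qed
  then show ?thesis using W by simp
qed

lemma star_inv_el:
  assumes a: "a \<in> PX X"
  shows "inv_el (PX X) (star X) a = tr a"
  unfolding inv_el_def
proof (rule the1_equality)
  show "tr a \<in> PX X \<and> star X (star X a (tr a)) a = a \<and> star X (star X (tr a) a) (tr a) = tr a"
    using tr_PX[OF a] star_inv1[OF a] star_inv2[OF a] by blast
  then show "\<exists>!b. b \<in> PX X \<and> star X (star X a b) a = a \<and> star X (star X b a) b = b"
  proof (intro ex1I)
    fix b assume h: "b \<in> PX X \<and> star X (star X a b) a = a \<and> star X (star X b a) b = b"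
    show "b = tr a"
      by (rule swap_lines_tr[OF a]) (use h star_U1[OF a, of b] star_U1[of b X a] a in blast)+
  qed blast
qed

lemma LP_PX:
  assumes sub: "\<And>Z. Z \<in> Ls \<Longrightarrow> Z \<subseteq> cset X" and gl: "\<And>Z. Z \<in> Ls \<Longrightarrow> is_gline X Z"
    and dj: "\<And>Z Z'. Z \<in> Ls \<Longrightarrow> Z' \<in> Ls \<Longrightarrow> Z \<inter> Z' \<noteq> {} \<Longrightarrow> Z = Z'"
  shows "Ls \<union> {{u} | u. u \<in> cset X - \<Union>Ls} \<in> PX X"
proof -
  let ?P = "Ls \<union> {{u} | u. u \<in> cset X - \<Union>Ls}"
  have "\<Union>?P = cset X" using sub by blast
  moreover have "disjoint ?P"
    unfolding pairwise_def disjnt_def using dj by blast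
  moreover have "{} \<notin> ?P" using gl unfolding is_gline_def by blast
  ultimately have "partition_on (cset X) ?P" unfolding partition_on_def by blast
  moreover have "is_singleton B \<or> is_gline X B" if "B \<in> ?P" for B using that gl by auto
  ultimately show ?thesis unfolding PX_def by blast
qed

definition eA :: "'a set \<Rightarrow> 'a set \<Rightarrow> 'a cp set set" where
  "eA X A = {L ` A \<union> R ` A} \<union> {{u} | u. u \<in> cset X - (L ` A \<union> R ` A)}"

lemma eA_PX: assumes "A \<subseteq> X" "A \<noteq> {}" shows "eA X A \<in> PX X"
proof -
  have "{L ` A \<union> R ` A} \<union> {{u} | u. u \<in> cset X - \<Union>{L ` A \<union> R ` A}} \<in> PX X"
    by (rule LP_PX) (use assms in \<open>auto simp: cset_def is_gline_def\<close>)
  then show ?thesis unfolding eA_def by simp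
qed

lemma eA_E: "L ` A \<union> R ` A \<in> eA X A" unfolding eA_def by blast
lemma eA_pt: "u \<in> cset X \<Longrightarrow> u \<notin> L ` A \<union> R ` A \<Longrightarrow> {u} \<in> eA X A" unfolding eA_def by blast
lemma eA_gline: "Z \<in> eA X A \<Longrightarrow> is_gline X Z \<Longrightarrow> Z = L ` A \<union> R ` A"
  unfolding eA_def using gline_not_single by fastforce

lemma eA_idem:
  assumes AX: "A \<subseteq> X" "A \<noteq> {}"
  shows "star X (eA X A) (eA X A) = eA X A"
proof (rule star_eqI[OF eA_PX[OF AX]])
  fix u Q assume u: "u \<in> cset X" and Q: "Q \<in> eA X A" "u \<in> Q"
  have pe: "pblocks X (eA X A)" using PX_pblocks[OF eA_PX[OF AX]] .
  show "sblk X (eA X A) (eA X A) u = Q"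
  proof (cases "u \<in> L ` A \<union> R ` A")
    case True
    have QE: "Q = L ` A \<union> R ` A" using pblocksD[OF pe Q(1) eA_E Q(2) True] .
    obtain x0 where x0: "x0 \<in> A" using AX by blast
    have "sblk X (eA X A) (eA X A) u = {v\<in>L ` A \<union> R ` A. \<exists>t. v = L t} \<union> {v\<in>L ` A \<union> R ` A. \<exists>t. v = R t}"
      by (rule two_block[OF pe pe eA_E eA_E, of x0 x0 x0]) (use x0 True in auto)
    also have "\<dots> = L ` A \<union> R ` A" by auto
    finally show ?thesis using QE by simp
  next
    case False
    have pt: "{u} \<in> eA X A" using eA_pt[OF u False] .
    then have Qu: "Q = {u}" using pblocksD[OF pe Q(1) pt Q(2)] by simp
    from cset_cases[OF u] show ?thesis
    proof
      assume "\<exists>x\<in>X. u = L x"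
      then obtain x where "x \<in> X" "u = L x" by blast
      then show ?thesis using sblk_pointL[of x "eA X A" X] pt Qu by simp
    next
      assume "\<exists>x\<in>X. u = R x"
      then obtain x where "x \<in> X" "u = R x" by blast
      then show ?thesis using sblk_pointR[of x "eA X A" X] pt Qu by simp
    qed
  qed
qed


lemma img_simps[simp]: "L t \<in> L ` B \<longleftrightarrow> t \<in> B" "R t \<in> R ` B \<longleftrightarrow> t \<in> B"
  "L t \<notin> R ` B" "R t \<notin> L ` B" "M t \<notin> L ` B" "M t \<notin> R ` B"
  by auto

lemma star_mu_comp:
  assumes a: "a \<in> PX X" and Z: "Z \<in> a" and gl: "is_gline X Z" and yB: "y \<in> rp Z"
  shows "sblk X (star X (tr a) (eA X (lp Z))) a (L y) = L ` rp Z \<union> R ` rp Z"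
proof -
  let ?A = "lp Z" and ?B = "rp Z" and ?e = "eA X (lp Z)"
  have Zc: "Z \<subseteq> cset X" using PX_sub[OF a Z] .
  obtain x0 where x0: "x0 \<in> ?A" using gl unfolding gline_iff lp_def by blast
  have AX: "?A \<subseteq> X" "?A \<noteq> {}" using Zc x0 unfolding lp_def by (auto simp: cset_def)
  have pe: "pblocks X ?e" using PX_pblocks[OF eA_PX[OF AX]] .
  have pta: "pblocks X (tr a)" using PX_pblocks[OF tr_PX[OF a]] .
  have pa: "pblocks X a" using PX_pblocks[OF a] .
  have Zt: "sw ` Z \<in> tr a" using Z tr_mem by (metis sw_img_sw)
  define G where "G = sblk X (tr a) ?e (L y)"
  have "G = {v\<in>sw ` Z. \<exists>t. v = L t} \<union> {v\<in>L ` ?A \<union> R ` ?A. \<exists>t. v = R t}"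
    unfolding G_def
    by (rule two_block[OF pta pe Zt eA_E, of y x0 x0]) (use x0 yB in \<open>auto simp: lp_def rp_def\<close>)
  also have "\<dots> = L ` ?B \<union> R ` ?A"
  proof (rule set_eqI)
    fix v show "v \<in> {v\<in>sw ` Z. \<exists>t. v = L t} \<union> {v\<in>L ` ?A \<union> R ` ?A. \<exists>t. v = R t} \<longleftrightarrow> v \<in> L ` ?B \<union> R ` ?A"
      by (cases v) (auto simp: lp_def rp_def)
  qed
  finally have G: "G = L ` ?B \<union> R ` ?A" .
  have Gc: "G \<in> star X (tr a) ?e" unfolding G_def by (rule sblk_in) (use yB Zc in \<open>auto simp: rp_def\<close>)
  have "sblk X (star X (tr a) ?e) a (L y) = {v\<in>G. \<exists>t. v = L t} \<union> {v\<in>Z. \<exists>t. v = R t}"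
    by (rule two_block[OF star_pblocks pa Gc Z, of y x0 y]) (use x0 yB G in \<open>auto simp: lp_def rp_def\<close>)
  also have "\<dots> = L ` ?B \<union> R ` ?B" using G by (auto simp: rp_def image_iff)
  finally show ?thesis .
qed

lemma lemM:
  assumes b: "b \<in> PX X" and AX: "A \<subseteq> X" and yB: "y \<in> B" and yX: "y \<in> X"
    and blk: "sblk X (star X (tr b) (eA X A)) b (L y) = L ` B \<union> R ` B"
  shows "(\<forall>V\<in>b. R y \<in> V \<longrightarrow> (\<exists>w. L w \<in> V) \<and> (\<forall>w. L w \<in> V \<longrightarrow> w \<in> A))
       \<and> (\<forall>x\<in>A. \<forall>U\<in>b. L x \<in> U \<longrightarrow> (\<exists>z. R z \<in> U) \<and> (\<forall>z. R z \<in> U \<longrightarrow> z \<in> B))"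
proof -
  define e where "e = eA X A"
  define c where "c = star X (tr b) e"
  have blk': "sblk X c b (L y) = L ` B \<union> R ` B" using blk unfolding c_def e_def .
  have go: "star_good c b (L y)" using sblk_other(1)[of "R y" X c b "L y"] blk' yB by auto
  have inO: "v \<in> L ` B \<union> R ` B" if "(L y, v) \<in> star_sim c b" "v \<in> cset X" for v
    using sblk_class[OF go that] blk' by simp
  define G where "G = sblk X (tr b) e (L y)"
  have Gc: "G \<in> c" unfolding G_def c_def by (rule sblk_in) (simp add: yX)
  have BG: "R_to_M ` G \<in> star_blocks c b" using star_blocksL[OF Gc] .
  have lyG: "L y \<in> G" unfolding G_def by (rule sblk_self) (simp add: yX)
  have GM: "(L y, v) \<in> star_sim c b" if "v \<in> R_to_M ` G" for v
    using sim_block[OF BG RM_L[OF lyG] that] .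
  have "G \<noteq> {L y}"
  proof
    assume "G = {L y}"
    then have "{L y} \<in> star_blocks c b" using BG by simp
    then show False using good_contra1[OF go sim_refl] by blast
  qed
  then obtain v where "v \<in> G" "v \<noteq> L y" using lyG by blast
  then have gi: "star_good (tr b) e (L y)" using sblk_other(1) unfolding G_def by blast
  have inG: "v \<in> G" if "(L y, v) \<in> star_sim (tr b) e" "v \<in> cset X" for v
    using sblk_class[OF gi that] unfolding G_def by simp
  have I: "(\<exists>w. L w \<in> V) \<and> (\<forall>w. L w \<in> V \<longrightarrow> w \<in> A) \<and> (\<forall>w. L w \<in> V \<longrightarrow> (L y, M w) \<in> star_sim (tr b) e)"
    if V: "V \<in> b" "R y \<in> V" for V
  proof -
    have Vt: "sw ` V \<in> tr b" using V(1) tr_mem by (metis sw_img_sw)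
    have lyV: "L y \<in> sw ` V" using V(2) by simp
    have BV: "R_to_M ` sw ` V \<in> star_blocks (tr b) e" using star_blocksL[OF Vt] .
    have SV: "(L y, u) \<in> star_sim (tr b) e" if "u \<in> R_to_M ` sw ` V" for u
      using sim_block[OF BV RM_L[OF lyV] that] .
    have "V \<noteq> {R y}"
    proof
      assume "V = {R y}"
      then have "{L y} \<in> star_blocks (tr b) e" using BV by simp
      then show False using good_contra1[OF gi sim_refl] by blast
    qed
    then have ex: "\<exists>w. L w \<in> V" using PX_line2[OF b V(1) V(2)] by blast
    have sm: "(L y, M w) \<in> star_sim (tr b) e" if "L w \<in> V" for w
      using SV[OF RM_R] that by simp
    have inA: "w \<in> A" if lw: "L w \<in> V" for w
    proof (rule ccontr)
      assume "w \<notin> A"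
      have wX: "w \<in> X" using PX_sub[OF b V(1)] lw by auto
      have "{L w} \<in> e" unfolding e_def by (rule eA_pt) (use wX \<open>w \<notin> A\<close> in auto)
      then have "{M w} \<in> star_blocks (tr b) e" using star_blocksR[of "{L w}" e "tr b"] by simp
      then show False using good_contra1[OF gi sm[OF lw]] by blast
    qed
    show ?thesis using ex inA sm by blast
  qed
  obtain V where V: "V \<in> b" "R y \<in> V" using PX_ex[OF b, of "R y"] yX by auto
  obtain w where lw: "L w \<in> V" using I[OF V] by blast
  have wA: "w \<in> A" and smw: "(L y, M w) \<in> star_sim (tr b) e" using I[OF V] lw by blast+
  have II: "(\<exists>z. R z \<in> U) \<and> (\<forall>z. R z \<in> U \<longrightarrow> z \<in> B)" if x: "x \<in> A" and U: "U \<in> b" "L x \<in> U" for x U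
  proof -
    have xX: "x \<in> X" using x AX by blast
    have BE: "L_to_M ` (L ` A \<union> R ` A) \<in> star_blocks (tr b) e" using star_blocksR[OF eA_E] unfolding e_def .
    have "(L y, R x) \<in> star_sim (tr b) e"
      using sim_trans[OF smw sim_block[OF BE LM_L LM_R]] wA x by blast
    then have "R x \<in> G" using inG xX by simp
    then have s2: "(L y, M x) \<in> star_sim c b" using GM[OF RM_R] by blast
    have BU: "L_to_M ` U \<in> star_blocks c b" using star_blocksR[OF U(1)] .
    have "U \<noteq> {L x}"
    proof
      assume "U = {L x}"
      then have "{M x} \<in> star_blocks c b" using BU by simp
      then show False using good_contra1[OF go s2] by blast
    qed
    then have ex: "\<exists>z. R z \<in> U" using PX_line2[OF b U(1) U(2)] by blast
    have "z \<in> B" if rz: "R z \<in> U" for z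
    proof -
      have zX: "z \<in> X" using PX_sub[OF b U(1)] rz by auto
      have "(L y, R z) \<in> star_sim c b" using sim_trans[OF s2 sim_block[OF BU LM_L[OF U(2)] LM_R[OF rz]]] .
      then have "R z \<in> L ` B \<union> R ` B" using inO[of "R z"] zX by simp
      then show ?thesis by auto
    qed
    then show ?thesis using ex by blast
  qed
  show ?thesis using I II by blast
qed


lemma sblk_transfer:
  assumes "star X \<alpha> \<beta> = star X \<alpha>' \<beta>'" "u \<in> cset X"
  shows "sblk X \<alpha> \<beta> u = sblk X \<alpha>' \<beta>' u"
proof -
  have "sblk X \<alpha> \<beta> u \<in> star X \<alpha>' \<beta>'" using sblk_in[OF assms(2)] assms(1) by metis
  then show ?thesis using star_blk(1) sblk_self[OF assms(2)] by metis
qed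

lemma star_mu_line:
  assumes a: "a \<in> PX X" and b: "b \<in> PX X"
    and H: "\<And>e. e \<in> PX X \<Longrightarrow> star X e e = e \<Longrightarrow> star X (star X (tr a) e) a = star X (star X (tr b) e) b"
    and Z: "Z \<in> a" and gl: "is_gline X Z"
  shows "Z \<in> b"
proof -
  define A where "A = lp Z"
  define B where "B = rp Z"
  have Zc: "Z \<subseteq> cset X" using PX_sub[OF a Z] .
  have ZAB: "Z = L ` A \<union> R ` B" unfolding A_def B_def by (rule cset_repr[OF Zc])
  obtain x0 y where x0: "x0 \<in> A" and yB: "y \<in> B" using gl unfolding gline_iff A_def B_def lp_def rp_def by blast
  have AX: "A \<subseteq> X" "A \<noteq> {}" using Zc x0 unfolding A_def lp_def by (auto simp: cset_def)
  have yX: "y \<in> X" using Zc yB unfolding B_def rp_def by (auto simp: cset_def)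
  have blk_a: "sblk X (star X (tr a) (eA X A)) a (L y) = L ` B \<union> R ` B"
    using star_mu_comp[OF a Z gl, of y] yB unfolding A_def B_def by simp
  have blk_b: "sblk X (star X (tr b) (eA X A)) b (L y) = L ` B \<union> R ` B"
    using blk_a sblk_transfer[OF H[OF eA_PX[OF AX] eA_idem[OF AX]], of "L y"] yX by simp
  note MB = lemM[OF b AX(1) yB yX blk_b]
  obtain V where V: "V \<in> b" "R y \<in> V" using PX_ex[OF b, of "R y"] yX by auto
  have Vc: "V \<subseteq> cset X" using PX_sub[OF b V(1)] .
  define A1 where "A1 = lp V"
  define B1 where "B1 = rp V"
  have VAB: "V = L ` A1 \<union> R ` B1" unfolding A1_def B1_def by (rule cset_repr[OF Vc])
  have A1A: "A1 \<subseteq> A" using MB V unfolding A1_def lp_def by blast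
  obtain x1 where x1: "x1 \<in> A1" using MB V unfolding A1_def lp_def by blast
  have B1B: "B1 \<subseteq> B" using MB V x1 A1A unfolding A1_def B1_def lp_def rp_def by blast
  have yB1: "y \<in> B1" using V unfolding B1_def rp_def by simp
  have glV: "is_gline X V" using x1 V Vc unfolding gline_iff A1_def lp_def by (auto simp: cset_def)
  have A1X: "A1 \<subseteq> X" "A1 \<noteq> {}" using A1A AX x1 by auto
  have blk_b': "sblk X (star X (tr b) (eA X A1)) b (L y) = L ` B1 \<union> R ` B1"
    using star_mu_comp[OF b V(1) glV, of y] yB1 unfolding A1_def B1_def by simp
  have blk_a': "sblk X (star X (tr a) (eA X A1)) a (L y) = L ` B1 \<union> R ` B1"
    using blk_b' sblk_transfer[OF H[OF eA_PX[OF A1X] eA_idem[OF A1X]], of "L y"] yX by simp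
  note MA = lemM[OF a A1X(1) yB1 yX blk_a']
  have ryZ: "R y \<in> Z" using yB unfolding B_def rp_def by simp
  have "A \<subseteq> A1" using MA Z ryZ unfolding A_def lp_def by blast
  moreover have "B \<subseteq> B1"
  proof
    fix z assume "z \<in> B"
    then have "R z \<in> Z" unfolding B_def rp_def by simp
    moreover have "L x1 \<in> Z" using x1 A1A unfolding A_def lp_def by blast
    ultimately show "z \<in> B1" using MA Z x1 by blast
  qed
  ultimately have "V = Z" using A1A B1B ZAB VAB by auto
  then show ?thesis using V by simp
qed

lemma star_fund: "fundamental (PX X) (star X)"
  unfolding fundamental_def
proof (intro equalityI subsetI)
  fix p assume p: "p \<in> mu_rel (PX X) (star X)"
  then obtain a b where ab: "p = (a, b)" "a \<in> PX X" "b \<in> PX X"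
    and H0: "\<forall>e\<in>PX X. star X e e = e \<longrightarrow> star X (star X (inv_el (PX X) (star X) a) e) a = star X (star X (inv_el (PX X) (star X) b) e) b"
    unfolding mu_rel_def by blast
  have H: "star X (star X (tr a) e) a = star X (star X (tr b) e) b" if "e \<in> PX X" "star X e e = e" for e
    using H0 that star_inv_el[OF ab(2)] star_inv_el[OF ab(3)] by metis
  have "a = b"
    by (rule PX_lines_eq[OF ab(2,3)]) (use star_mu_line[OF ab(2,3) H] star_mu_line[OF ab(3,2) H[symmetric]] in blast)+
  then show "p \<in> Id_on (PX X)" using ab by (simp add: Id_on_def)
next
  fix p assume "p \<in> Id_on (PX X)"
  then show "p \<in> mu_rel (PX X) (star X)" unfolding mu_rel_def by auto
qed


lemma gline_LR: "is_gline X (L ` A \<union> R ` B) \<longleftrightarrow> A \<inter> X \<noteq> {} \<and> B \<inter> X \<noteq> {}"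
  unfolding gline_iff by auto

lemma sw_LR: "sw ` (L ` A \<union> R ` B) = L ` B \<union> R ` A"
  by (auto simp: image_Un image_image)

lemma PX_LR_L:
  assumes "P \<in> PX X" "L ` A \<union> R ` B \<in> P" "L ` A' \<union> R ` B' \<in> P" "t \<in> A" "t \<in> A'"
  shows "A = A' \<and> B = B'"
proof -
  have "L ` A \<union> R ` B = L ` A' \<union> R ` B'" by (rule PX_eq[OF assms(1,2,3), of "L t"]) (use assms(4,5) in auto)
  then show ?thesis by (simp only: LR_inj)
qed

lemma PX_LR_R:
  assumes "P \<in> PX X" "L ` A \<union> R ` B \<in> P" "L ` A' \<union> R ` B' \<in> P" "t \<in> B" "t \<in> B'"
  shows "A = A' \<and> B = B'"
proof -
  have "L ` A \<union> R ` B = L ` A' \<union> R ` B'" by (rule PX_eq[OF assms(1,2,3), of "R t"]) (use assms(4,5) in auto)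
  then show ?thesis by (simp only: LR_inj)
qed

lemma circ_linesE:
  assumes "Z \<in> circ_lines X \<alpha> \<beta>"
  obtains A B D where "Z = L ` A \<union> R ` D" "L ` A \<union> R ` B \<in> \<alpha>" "is_gline X (L ` A \<union> R ` B)"
    "L ` B \<union> R ` D \<in> \<beta>" "is_gline X (L ` B \<union> R ` D)"
  using assms unfolding circ_lines_def by blast

lemma circ_linesI:
  assumes "L ` A \<union> R ` B \<in> \<alpha>" "is_gline X (L ` A \<union> R ` B)"
    "L ` B \<union> R ` D \<in> \<beta>" "is_gline X (L ` B \<union> R ` D)"
  shows "L ` A \<union> R ` D \<in> circ_lines X \<alpha> \<beta>"
  using assms unfolding circ_lines_def by blast

lemma circ_lines_gline: "Z \<in> circ_lines X \<alpha> \<beta> \<Longrightarrow> is_gline X Z"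
  by (erule circ_linesE) (auto simp: gline_LR)

lemma circ_gline_iff: "Z \<in> circ X \<alpha> \<beta> \<and> is_gline X Z \<longleftrightarrow> Z \<in> circ_lines X \<alpha> \<beta>"
proof
  assume h: "Z \<in> circ X \<alpha> \<beta> \<and> is_gline X Z"
  then consider "Z \<in> circ_lines X \<alpha> \<beta>" | u where "Z = {u}" unfolding circ_def by blast
  then show "Z \<in> circ_lines X \<alpha> \<beta>"
  proof cases
    case 2 then show ?thesis using h gline_not_single by (metis is_singletonI)
  qed
next
  assume "Z \<in> circ_lines X \<alpha> \<beta>"
  then show "Z \<in> circ X \<alpha> \<beta> \<and> is_gline X Z" using circ_lines_gline unfolding circ_def by blast
qed

lemma circ_PX:
  assumes a: "\<alpha> \<in> PX X" and b: "\<beta> \<in> PX X"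
  shows "circ X \<alpha> \<beta> \<in> PX X"
  unfolding circ_def
proof (rule LP_PX)
  fix Z assume "Z \<in> circ_lines X \<alpha> \<beta>"
  then show "is_gline X Z" by (rule circ_lines_gline)
next
  fix Z assume "Z \<in> circ_lines X \<alpha> \<beta>"
  then obtain A B D where Z: "Z = L ` A \<union> R ` D" "L ` A \<union> R ` B \<in> \<alpha>" "L ` B \<union> R ` D \<in> \<beta>"
    by (rule circ_linesE)
  have "L ` A \<subseteq> cset X" using PX_sub[OF a Z(2)] by blast
  moreover have "R ` D \<subseteq> cset X" using PX_sub[OF b Z(3)] by blast
  ultimately show "Z \<subseteq> cset X" using Z(1) by blast
next
  fix Z Z' assume Z: "Z \<in> circ_lines X \<alpha> \<beta>" and Z': "Z' \<in> circ_lines X \<alpha> \<beta>" and ne: "Z \<inter> Z' \<noteq> {}"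
  obtain A B D where h: "Z = L ` A \<union> R ` D" "L ` A \<union> R ` B \<in> \<alpha>" "is_gline X (L ` A \<union> R ` B)"
    "L ` B \<union> R ` D \<in> \<beta>" "is_gline X (L ` B \<union> R ` D)" using Z by (rule circ_linesE)
  obtain A' B' D' where h': "Z' = L ` A' \<union> R ` D'" "L ` A' \<union> R ` B' \<in> \<alpha>" "is_gline X (L ` A' \<union> R ` B')"
    "L ` B' \<union> R ` D' \<in> \<beta>" "is_gline X (L ` B' \<union> R ` D')" using Z' by (rule circ_linesE)
  obtain v where v: "v \<in> Z" "v \<in> Z'" using ne by blast
  show "Z = Z'"
  proof (cases v)
    case (L t)
    then have "t \<in> A" "t \<in> A'" using v h(1) h'(1) by auto
    then have e1: "A = A'" "B = B'" using PX_LR_L[OF a h(2) h'(2)] by auto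
    obtain s where "s \<in> B" using h(5) unfolding gline_LR by blast
    then have "D = D'" using PX_LR_L[OF b h(4) h'(4), of s] e1 by auto
    then show ?thesis using h(1) h'(1) e1 by simp
  next
    case (R t)
    then have "t \<in> D" "t \<in> D'" using v h(1) h'(1) by auto
    then have e1: "B = B'" "D = D'" using PX_LR_R[OF b h(4) h'(4)] by auto
    obtain s where "s \<in> B" using h(3) unfolding gline_LR by blast
    then have "A = A'" using PX_LR_R[OF a h(2) h'(2), of s] e1 by auto
    then show ?thesis using h(1) h'(1) e1 by simp
  next
    case (M t) then show ?thesis using v h(1) by auto
  qed
qed

lemma PX_lineE:
  assumes "P \<in> PX X" "Z \<in> P" "is_gline X Z"
  obtains A B where "Z = L ` A \<union> R ` B" "A \<noteq> {}" "B \<noteq> {}" "A \<subseteq> X" "B \<subseteq> X"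
proof -
  have Zc: "Z \<subseteq> cset X" using PX_sub[OF assms(1,2)] .
  have "Z = L ` lp Z \<union> R ` rp Z" by (rule cset_repr[OF Zc])
  moreover have "lp Z \<noteq> {}" "rp Z \<noteq> {}" using assms(3) unfolding gline_iff lp_def rp_def by auto
  moreover have "lp Z \<subseteq> X" "rp Z \<subseteq> X" using Zc unfolding lp_def rp_def cset_def by auto
  ultimately show ?thesis using that by blast
qed

lemma circ_U1:
  assumes a: "a \<in> PX X" and b: "b \<in> PX X"
    and eq1: "circ X (circ X a b) a = a" and Z: "Z \<in> a" and gl: "is_gline X Z"
  shows "sw ` Z \<in> b"
proof -
  obtain A B where AB: "Z = L ` A \<union> R ` B" "A \<noteq> {}" "B \<noteq> {}" "A \<subseteq> X" "B \<subseteq> X" by (rule PX_lineE[OF a Z gl])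
  have "Z \<in> circ X (circ X a b) a" using Z eq1 by simp
  then have "Z \<in> circ_lines X (circ X a b) a" using circ_gline_iff gl by blast
  then obtain A0 B0 D0 where h: "Z = L ` A0 \<union> R ` D0" "L ` A0 \<union> R ` B0 \<in> circ X a b" "is_gline X (L ` A0 \<union> R ` B0)"
    "L ` B0 \<union> R ` D0 \<in> a" "is_gline X (L ` B0 \<union> R ` D0)" by (rule circ_linesE)
  have "L ` A0 \<union> R ` D0 = L ` A \<union> R ` B" using h(1) AB(1) by simp
  then have e0: "A0 = A" "D0 = B" by (simp_all only: LR_inj)
  have "L ` A0 \<union> R ` B0 \<in> circ_lines X a b" using h(2,3) circ_gline_iff[of _ X a b] by blast
  then obtain A1 B1 D1 where h1: "L ` A0 \<union> R ` B0 = L ` A1 \<union> R ` D1" "L ` A1 \<union> R ` B1 \<in> a"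
    "L ` B1 \<union> R ` D1 \<in> b" by (rule circ_linesE)
  have "L ` A0 \<union> R ` B0 = L ` A1 \<union> R ` D1" using h1(1) by simp
  then have e1: "A1 = A" "D1 = B0" using e0 by (simp_all only: LR_inj)
  obtain t where t: "t \<in> A" using AB by blast
  have "A1 = A \<and> B1 = B" by (rule PX_LR_L[OF a h1(2), of A B t]) (use Z AB e1 t in auto)
  then have "B1 = B" by simp
  obtain s where s: "s \<in> B" using AB by blast
  have "B0 = A \<and> D0 = B" by (rule PX_LR_R[OF a h(4), of A B s]) (use Z AB e0 s in auto)
  then have "B0 = A" by simp
  have "L ` B \<union> R ` A \<in> b" using h1(3) \<open>B1 = B\<close> e1 \<open>B0 = A\<close> by simp
  then show ?thesis unfolding AB(1) sw_LR .
qed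



lemma circ_inv1:
  assumes a: "a \<in> PX X"
  shows "circ X (circ X a (tr a)) a = a"
proof (rule PX_lines_eq[OF circ_PX[OF circ_PX[OF a tr_PX[OF a]] a] a])
  fix Z assume Z: "Z \<in> circ X (circ X a (tr a)) a" "is_gline X Z"
  then have "Z \<in> circ_lines X (circ X a (tr a)) a" using circ_gline_iff by blast
  then obtain A0 B0 D0 where h: "Z = L ` A0 \<union> R ` D0" "L ` A0 \<union> R ` B0 \<in> circ X a (tr a)"
    "is_gline X (L ` A0 \<union> R ` B0)" "L ` B0 \<union> R ` D0 \<in> a" by (rule circ_linesE)
  have "L ` A0 \<union> R ` B0 \<in> circ_lines X a (tr a)" using h(2,3) circ_gline_iff by blast
  then obtain A1 B1 D1 where h1: "L ` A0 \<union> R ` B0 = L ` A1 \<union> R ` D1" "L ` A1 \<union> R ` B1 \<in> a"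
    "is_gline X (L ` A1 \<union> R ` B1)" "L ` B1 \<union> R ` D1 \<in> tr a" by (rule circ_linesE)
  have "sw ` (L ` B1 \<union> R ` D1) \<in> a" using h1(4) tr_mem by blast
  then have t: "L ` D1 \<union> R ` B1 \<in> a" unfolding sw_LR .
  obtain s where s: "s \<in> B1" using h1(3) unfolding gline_LR by blast
  have "A1 = D1 \<and> B1 = B1" by (rule PX_LR_R[OF a h1(2) t s s])
  moreover have "A0 = A1 \<and> B0 = D1" using LR_inj[of A0 B0 A1 D1] h1(1) by blast
  ultimately have "B0 = A0" by simp
  then show "Z \<in> a" using h(1) h(4) by simp
next
  fix Z assume Z: "Z \<in> a" "is_gline X Z"
  obtain A B where AB: "Z = L ` A \<union> R ` B" "A \<noteq> {}" "B \<noteq> {}" "A \<subseteq> X" "B \<subseteq> X"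
    by (rule PX_lineE[OF a Z])
  have glZ: "is_gline X (L ` A \<union> R ` B)" using Z AB by simp
  have glBA: "is_gline X (L ` B \<union> R ` A)" and glAA: "is_gline X (L ` A \<union> R ` A)"
    using AB unfolding gline_LR by auto
  have "sw ` (L ` B \<union> R ` A) \<in> a" unfolding sw_LR using Z AB by simp
  then have t: "L ` B \<union> R ` A \<in> tr a" using tr_mem by blast
  have ZA: "L ` A \<union> R ` B \<in> a" using Z AB by simp
  have "L ` A \<union> R ` A \<in> circ_lines X a (tr a)"
    by (rule circ_linesI[OF ZA glZ t glBA])
  then have c: "L ` A \<union> R ` A \<in> circ X a (tr a)" using circ_gline_iff by blast
  have "L ` A \<union> R ` B \<in> circ_lines X (circ X a (tr a)) a"
    by (rule circ_linesI[OF c glAA ZA glZ])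
  then show "Z \<in> circ X (circ X a (tr a)) a" using circ_gline_iff AB(1) by blast
qed

lemma circ_inv2:
  assumes a: "a \<in> PX X"
  shows "circ X (circ X (tr a) a) (tr a) = tr a"
  using circ_inv1[OF tr_PX[OF a]] by simp

lemma circ_inv_el:
  assumes a: "a \<in> PX X"
  shows "inv_el (PX X) (circ X) a = tr a"
  unfolding inv_el_def
proof (rule the1_equality)
  show "tr a \<in> PX X \<and> circ X (circ X a (tr a)) a = a \<and> circ X (circ X (tr a) a) (tr a) = tr a"
    using tr_PX[OF a] circ_inv1[OF a] circ_inv2[OF a] by blast
  then show "\<exists>!b. b \<in> PX X \<and> circ X (circ X a b) a = a \<and> circ X (circ X b a) b = b"
  proof (intro ex1I)
    fix b assume h: "b \<in> PX X \<and> circ X (circ X a b) a = a \<and> circ X (circ X b a) b = b"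
    show "b = tr a"
      by (rule swap_lines_tr[OF a]) (use h circ_U1[OF a, of b] circ_U1[of b X a] a in blast)+
  qed blast
qed

lemma eA_circ_idem:
  assumes AX: "A \<subseteq> X" "A \<noteq> {}"
  shows "circ X (eA X A) (eA X A) = eA X A"
proof (rule PX_lines_eq[OF circ_PX[OF eA_PX[OF AX] eA_PX[OF AX]] eA_PX[OF AX]])
  fix Z assume "Z \<in> circ X (eA X A) (eA X A)" "is_gline X Z"
  then have "Z \<in> circ_lines X (eA X A) (eA X A)" using circ_gline_iff by blast
  then obtain A0 B0 D0 where h: "Z = L ` A0 \<union> R ` D0" "L ` A0 \<union> R ` B0 \<in> eA X A"
    "is_gline X (L ` A0 \<union> R ` B0)" "L ` B0 \<union> R ` D0 \<in> eA X A" "is_gline X (L ` B0 \<union> R ` D0)"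
    by (rule circ_linesE)
  have "L ` A0 \<union> R ` B0 = L ` A \<union> R ` A" using eA_gline h(2,3) .
  then have e1: "A0 = A" "B0 = A" by (simp_all only: LR_inj)
  have "L ` B0 \<union> R ` D0 = L ` A \<union> R ` A" using eA_gline h(4,5) .
  then have e2: "D0 = A" by (simp only: LR_inj)
  show "Z \<in> eA X A" using h(1) e1 e2 eA_E by simp
next
  fix Z assume Z: "Z \<in> eA X A" "is_gline X Z"
  then have ZE: "Z = L ` A \<union> R ` A" using eA_gline by blast
  have gl: "is_gline X (L ` A \<union> R ` A)" using AX unfolding gline_LR by auto
  have "L ` A \<union> R ` A \<in> circ_lines X (eA X A) (eA X A)"
    by (rule circ_linesI[OF eA_E gl eA_E gl])
  then show "Z \<in> circ X (eA X A) (eA X A)" using circ_gline_iff ZE by blast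
qed

lemma circ_mu_line:
  assumes a: "a \<in> PX X" and b: "b \<in> PX X"
    and H: "\<And>e. e \<in> PX X \<Longrightarrow> circ X e e = e \<Longrightarrow> circ X (circ X (tr a) e) a = circ X (circ X (tr b) e) b"
    and Z: "Z \<in> a" and gl: "is_gline X Z"
  shows "Z \<in> b"
proof -
  obtain A B where AB: "Z = L ` A \<union> R ` B" "A \<noteq> {}" "B \<noteq> {}" "A \<subseteq> X" "B \<subseteq> X"
    by (rule PX_lineE[OF a Z gl])
  have AX: "A \<subseteq> X" "A \<noteq> {}" using AB by auto
  have glZ: "is_gline X (L ` A \<union> R ` B)" using gl AB by simp
  have glBA: "is_gline X (L ` B \<union> R ` A)" and glAA: "is_gline X (L ` A \<union> R ` A)"
    and glBB: "is_gline X (L ` B \<union> R ` B)"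
    using AB unfolding gline_LR by auto
  have "sw ` (L ` B \<union> R ` A) \<in> a" unfolding sw_LR using Z AB by simp
  then have t: "L ` B \<union> R ` A \<in> tr a" using tr_mem by blast
  have "L ` B \<union> R ` A \<in> circ_lines X (tr a) (eA X A)"
    by (rule circ_linesI[OF t glBA eA_E glAA])
  then have c1: "L ` B \<union> R ` A \<in> circ X (tr a) (eA X A)" using circ_gline_iff by blast
  have ZA: "L ` A \<union> R ` B \<in> a" using Z AB by simp
  have "L ` B \<union> R ` B \<in> circ_lines X (circ X (tr a) (eA X A)) a"
    by (rule circ_linesI[OF c1 glBA ZA glZ])
  then have "L ` B \<union> R ` B \<in> circ X (circ X (tr a) (eA X A)) a" using circ_gline_iff by blast
  then have "L ` B \<union> R ` B \<in> circ X (circ X (tr b) (eA X A)) b"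
    using H[OF eA_PX[OF AX] eA_circ_idem[OF AX]] by simp
  then have "L ` B \<union> R ` B \<in> circ_lines X (circ X (tr b) (eA X A)) b" using circ_gline_iff glBB by blast
  then obtain A0 B0 D0 where h: "L ` B \<union> R ` B = L ` A0 \<union> R ` D0" "L ` A0 \<union> R ` B0 \<in> circ X (tr b) (eA X A)"
    "is_gline X (L ` A0 \<union> R ` B0)" "L ` B0 \<union> R ` D0 \<in> b" by (rule circ_linesE)
  have e0: "B = A0 \<and> B = D0" using LR_inj[of B B A0 D0] h(1) by blast
  have "L ` A0 \<union> R ` B0 \<in> circ_lines X (tr b) (eA X A)" using h(2,3) circ_gline_iff by blast
  then obtain A1 B1 D1 where h1: "L ` A0 \<union> R ` B0 = L ` A1 \<union> R ` D1"
    "L ` B1 \<union> R ` D1 \<in> eA X A" "is_gline X (L ` B1 \<union> R ` D1)" by (rule circ_linesE)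
  have "L ` B1 \<union> R ` D1 = L ` A \<union> R ` A" using eA_gline h1(2,3) .
  then have "D1 = A" by (simp only: LR_inj)
  moreover have "A0 = A1 \<and> B0 = D1" using LR_inj[of A0 B0 A1 D1] h1(1) by blast
  ultimately have "B0 = A" by simp
  then have "L ` A \<union> R ` B \<in> b" using h(4) e0 by metis
  then show ?thesis using AB(1) by simp
qed

lemma circ_fund: "fundamental (PX X) (circ X)"
  unfolding fundamental_def
proof (intro equalityI subsetI)
  fix p assume p: "p \<in> mu_rel (PX X) (circ X)"
  then obtain a b where ab: "p = (a, b)" "a \<in> PX X" "b \<in> PX X"
    and H0: "\<forall>e\<in>PX X. circ X e e = e \<longrightarrow> circ X (circ X (inv_el (PX X) (circ X) a) e) a = circ X (circ X (inv_el (PX X) (circ X) b) e) b"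
    unfolding mu_rel_def by blast
  have H: "circ X (circ X (tr a) e) a = circ X (circ X (tr b) e) b" if "e \<in> PX X" "circ X e e = e" for e
    using H0 that circ_inv_el[OF ab(2)] circ_inv_el[OF ab(3)] by metis
  have "a = b"
    by (rule PX_lines_eq[OF ab(2,3)]) (use circ_mu_line[OF ab(2,3) H] circ_mu_line[OF ab(3,2) H[symmetric]] in blast)+
  then show "p \<in> Id_on (PX X)" using ab by (simp add: Id_on_def)
next
  fix p assume "p \<in> Id_on (PX X)"
  then show "p \<in> mu_rel (PX X) (circ X)" unfolding mu_rel_def by auto
qed

theorem mainTheorem3:
  fixes X :: "'a set"
  assumes "\<exists>x\<in>X. \<exists>y\<in>X. x \<noteq> y"
  shows "fundamental (PX X) (star X) \<and> fundamental (PX X) (circ X)"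
  using star_fund circ_fund by blast

end
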